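(* Let $n \geq 1$, let $\mathbb{K}$ be a field and $S=\mathbb{K}[x_1,\dots,x_n]$. Let $M_n^{(1)} \subset S$ be the ideal \[M_n^{(1)}=\langle x_i^{\,n} : 1\le i\le n\rangle+\langle x_i^{\,n-1}x_j^{\,n-1} : 1\le i<j\le n\rangle .\] Then the number of standard monomials of $M_n^{(1)}$ (monomials of $S$ divisible by no generator), equivalently $\dim_{\mathbb{K}} S/M_n^{(1)}$, equals \[(2n-1)(n-1)^{n-1}\] (with the convention $0^0=1$).
   Context: The ideal $M_n^{(1)}$ is the $1$-skeleton ideal of the complete graph $K_{n+1}$ on vertex set $\{0,1,\dots,n\}$ with sink $0$: for a graph $G$ on $\{0,1,\dots,n\}$ and nonempty $\sigma\subseteq[n]=\{1,\dots,n\}$ one sets $m_\sigma=\prod_{i\in\sigma}x_i^{\mathrm{outdeg}_\sigma(i)}$, where $\mathrm{outdeg}_\sigma(i)$ is the number of vertices of $G$ not in $\sigma$ adjacent to $i$, and $M_G^{(1)}=\langle m_\sigma : \emptyset\ne\sigma\subseteq[n],\ |\sigma|\le 2\rangle$. For $G=K_{n+1}$ this gives the generators displayed in the claim. *)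

theory Defs
  imports Main
begin

text \<open>A monomial x_1^(a 1) ... x_n^(a n) of S = K[x_1,...,x_n] is represented by its
exponent vector a :: nat \<Rightarrow> nat, which vanishes outside {1..n}.\<close>

definition monomials :: "nat \<Rightarrow> (nat \<Rightarrow> nat) set" where
  "monomials n = {a. \<forall>i. i \<notin> {1..n} \<longrightarrow> a i = 0}"

definition mon_dvd :: "(nat \<Rightarrow> nat) \<Rightarrow> (nat \<Rightarrow> nat) \<Rightarrow> bool" where
  "mon_dvd g a \<longleftrightarrow> (\<forall>i. g i \<le> a i)"

definition xpow :: "nat \<Rightarrow> nat \<Rightarrow> (nat \<Rightarrow> nat)" where
  "xpow i k = (\<lambda>l. if l = i then k else 0)"

definition M1_gens :: "nat \<Rightarrow> (nat \<Rightarrow> nat) set" where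
  "M1_gens n = {xpow i n | i. i \<in> {1..n}}
     \<union> {(\<lambda>l. xpow i (n - 1) l + xpow j (n - 1) l) | i j. 1 \<le> i \<and> i < j \<and> j \<le> n}"

definition standard_monomials :: "nat \<Rightarrow> (nat \<Rightarrow> nat) set \<Rightarrow> (nat \<Rightarrow> nat) set" where
  "standard_monomials n G = {a \<in> monomials n. \<forall>g\<in>G. \<not> mon_dvd g a}"

end

theory Submission
  imports Defs
begin

definition C0 :: "nat \<Rightarrow> nat \<Rightarrow> (nat \<Rightarrow> nat) set" where
  "C0 m k = {a. (\<forall>i. i \<notin> {1..k} \<longrightarrow> a i = 0) \<and> (\<forall>i\<in>{1..k}. a i < m)}"

definition C1 :: "nat \<Rightarrow> nat \<Rightarrow> (nat \<Rightarrow> nat) set" where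
  "C1 m k = {a. (\<forall>i. i \<notin> {1..k} \<longrightarrow> a i = 0) \<and> (\<forall>i\<in>{1..k}. a i \<le> m)
      \<and> (\<forall>i\<in>{1..k}. \<forall>j\<in>{1..k}. a i = m \<and> a j = m \<longrightarrow> i = j)}"

definition upd :: "nat \<Rightarrow> (nat \<Rightarrow> nat) \<times> nat \<Rightarrow> (nat \<Rightarrow> nat)" where
  "upd k = (\<lambda>(f,v). f(Suc k := v))"

lemma upd_inj:
  assumes "X \<subseteq> {a. a (Suc k) = 0}"
  shows "inj_on (upd k) (X \<times> V)"
proof (rule inj_onI)
  fix p q assume p: "p \<in> X \<times> V" and q: "q \<in> X \<times> V" and e: "upd k p = upd k q"
  obtain f v where pf: "p = (f,v)" by (cases p)
  obtain g w where qg: "q = (g,w)" by (cases q)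
  have e2: "f(Suc k := v) = g(Suc k := w)" using e pf qg by (simp add: upd_def)
  have vw: "v = w" using fun_cong[OF e2, of "Suc k"] by simp
  have f0: "f (Suc k) = 0" "g (Suc k) = 0" using p q pf qg assms by auto
  have "f = g"
  proof
    fix x show "f x = g x"
      using fun_cong[OF e2, of x] f0 by (cases "x = Suc k") auto
  qed
  then show "p = q" using pf qg vw by simp
qed

lemma upd_card:
  assumes "X \<subseteq> {a. a (Suc k) = 0}" "finite X" "finite V"
  shows "finite (upd k ` (X \<times> V)) \<and> card (upd k ` (X \<times> V)) = card X * card V"
  using card_image[OF upd_inj[OF assms(1)], of V] assms(2,3) by (simp add: card_cartesian_product)

lemma C0_zero: "f \<in> C0 m k \<Longrightarrow> \<forall>i. i \<notin> {1..k} \<longrightarrow> f i = 0" unfolding C0_def by blast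
lemma C1_zero: "f \<in> C1 m k \<Longrightarrow> \<forall>i. i \<notin> {1..k} \<longrightarrow> f i = 0" unfolding C1_def by blast
lemma C0_lt: "f \<in> C0 m k \<Longrightarrow> i \<in> {1..k} \<Longrightarrow> f i < m" unfolding C0_def by blast
lemma C0_le: "f \<in> C0 m k \<Longrightarrow> \<forall>i\<in>{1..k}. f i \<le> m" using C0_lt less_imp_le by blast
lemma C1_le: "f \<in> C1 m k \<Longrightarrow> \<forall>i\<in>{1..k}. f i \<le> m" unfolding C1_def by blast
lemma C1_uniq: "f \<in> C1 m k \<Longrightarrow> \<forall>i\<in>{1..k}. \<forall>j\<in>{1..k}. f i = m \<and> f j = m \<longrightarrow> i = j"
  unfolding C1_def by blast
lemma C0_uniq: "f \<in> C0 m k \<Longrightarrow> \<forall>i\<in>{1..k}. \<forall>j\<in>{1..k}. f i = m \<and> f j = m \<longrightarrow> i = j"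
  by (metis C0_lt less_irrefl)
lemma C1_I: "(\<forall>i. i \<notin> {1..k} \<longrightarrow> a i = 0) \<Longrightarrow> (\<forall>i\<in>{1..k}. a i \<le> m) \<Longrightarrow>
   (\<forall>i\<in>{1..k}. \<forall>j\<in>{1..k}. a i = m \<and> a j = m \<longrightarrow> i = j) \<Longrightarrow> a \<in> C1 m k"
  unfolding C1_def by blast

lemma C0_sub: "C0 m k \<subseteq> {a. a (Suc k) = 0}" by (auto simp: C0_def)
lemma C1_sub: "C1 m k \<subseteq> {a. a (Suc k) = 0}"
proof
  fix a assume "a \<in> C1 m k"
  then have z: "\<forall>i. i \<notin> {1..k} \<longrightarrow> a i = 0" by (rule C1_zero)
  have "a (Suc k) = 0" using z[rule_format, of "Suc k"] by simp
  then show "a \<in> {a. a (Suc k) = 0}" by simp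
qed

lemma C0_rec: "C0 m (Suc k) = upd k ` (C0 m k \<times> {..<m})"
proof
  show "C0 m (Suc k) \<subseteq> upd k ` (C0 m k \<times> {..<m})"
  proof
    fix a assume a: "a \<in> C0 m (Suc k)"
    have "a(Suc k := 0) \<in> C0 m k" using a by (auto simp: C0_def)
    moreover have "a (Suc k) < m" using a by (auto simp: C0_def)
    moreover have "a = upd k (a(Suc k := 0), a (Suc k))" by (simp add: upd_def)
    ultimately show "a \<in> upd k ` (C0 m k \<times> {..<m})" by blast
  qed
next
  show "upd k ` (C0 m k \<times> {..<m}) \<subseteq> C0 m (Suc k)"
    by (auto simp: C0_def upd_def)
qed

lemma C1_rec: "C1 m (Suc k) = upd k ` (C1 m k \<times> {..<m}) \<union> upd k ` (C0 m k \<times> {m})"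
proof
  show "C1 m (Suc k) \<subseteq> upd k ` (C1 m k \<times> {..<m}) \<union> upd k ` (C0 m k \<times> {m})"
  proof
    fix a assume a: "a \<in> C1 m (Suc k)"
    have ae: "a = upd k (a(Suc k := 0), a (Suc k))" by (simp add: upd_def)
    have le: "a (Suc k) \<le> m" using C1_le[OF a] by simp
    show "a \<in> upd k ` (C1 m k \<times> {..<m}) \<union> upd k ` (C0 m k \<times> {m})"
    proof (cases "a (Suc k) = m")
      case True
      have "a(Suc k := 0) \<in> C0 m k"
        unfolding C0_def
      proof (intro CollectI conjI allI impI ballI)
        fix i assume "i \<notin> {1..k}" then show "(a(Suc k := 0)) i = 0"
          using C1_zero[OF a] by (cases "i = Suc k") auto
      next
        fix i assume i: "i \<in> {1..k}"
        have i2: "i \<in> {1..Suc k}" "Suc k \<in> {1..Suc k}" "i \<noteq> Suc k" using i by auto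
        have "a i \<le> m" using a i2 unfolding C1_def by blast
        moreover have "a i \<noteq> m" using a i2 True unfolding C1_def by blast
        ultimately have "a i < m" by simp
        then show "(a(Suc k := 0)) i < m" using i by auto
      qed
      then have "(a(Suc k := 0), a (Suc k)) \<in> C0 m k \<times> {m}" using True by simp
      then show ?thesis using ae by (metis UnI2 image_eqI)
    next
      case False
      have a1: "\<forall>i. i \<notin> {1..Suc k} \<longrightarrow> a i = 0" "\<forall>i\<in>{1..Suc k}. a i \<le> m"
        "\<forall>i\<in>{1..Suc k}. \<forall>j\<in>{1..Suc k}. a i = m \<and> a j = m \<longrightarrow> i = j"
        using a unfolding C1_def by blast+
      have "a(Suc k := 0) \<in> C1 m k"
        unfolding C1_def
      proof (intro CollectI conjI allI impI ballI)
        fix i assume "i \<notin> {1..k}" then show "(a(Suc k := 0)) i = 0"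
          using a1(1) by (cases "i = Suc k") auto
      next
        fix i assume "i \<in> {1..k}" then show "(a(Suc k := 0)) i \<le> m"
          using a1(2) by auto
      next
        fix i j assume "i \<in> {1..k}" "j \<in> {1..k}" "(a(Suc k := 0)) i = m \<and> (a(Suc k := 0)) j = m"
        then show "i = j" using a1(3) by auto
      qed
      then have "(a(Suc k := 0), a (Suc k)) \<in> C1 m k \<times> {..<m}" using False le by simp
      then show ?thesis using ae by (metis UnI1 image_eqI)
    qed
  qed
next
  show "upd k ` (C1 m k \<times> {..<m}) \<union> upd k ` (C0 m k \<times> {m}) \<subseteq> C1 m (Suc k)"
  proof
    fix a assume "a \<in> upd k ` (C1 m k \<times> {..<m}) \<union> upd k ` (C0 m k \<times> {m})"
    then obtain f v where av: "a = f(Suc k := v)" and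
      cs: "(f \<in> C1 m k \<and> v < m) \<or> (f \<in> C0 m k \<and> v = m)"
      unfolding upd_def by (auto split: prod.splits)
    have fC: "f \<in> C1 m k \<or> f \<in> C0 m k" and vm: "v \<le> m" using cs by auto
    have f0: "\<forall>i. i \<notin> {1..k} \<longrightarrow> f i = 0"
      using fC C1_zero C0_zero by blast
    have fle: "\<forall>i\<in>{1..k}. f i \<le> m"
      using fC C1_le C0_le by blast
    have fu: "\<forall>i\<in>{1..k}. \<forall>j\<in>{1..k}. f i = m \<and> f j = m \<longrightarrow> i = j"
      using fC C1_uniq C0_uniq by blast
    have fv: "v = m \<longrightarrow> (\<forall>i\<in>{1..k}. f i \<noteq> m)"
    proof (intro impI ballI)
      fix i assume "v = m" "i \<in> {1..k}"
      then have "f \<in> C0 m k" using cs by auto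
      then show "f i \<noteq> m" using C0_lt[OF _ \<open>i \<in> {1..k}\<close>] by fastforce
    qed
    show "a \<in> C1 m (Suc k)" unfolding C1_def
    proof (intro CollectI conjI allI impI ballI)
      fix i assume "i \<notin> {1..Suc k}" then show "a i = 0" using f0 av by auto
    next
      fix i assume "i \<in> {1..Suc k}" then show "a i \<le> m" using fle vm av
        by (cases "i = Suc k") auto
    next
      fix i j assume ij: "i \<in> {1..Suc k}" "j \<in> {1..Suc k}" "a i = m \<and> a j = m"
      show "i = j"
      proof (cases "i = Suc k"; cases "j = Suc k")
        assume "i = Suc k" "j \<noteq> Suc k" then show ?thesis using ij fv av by auto
      next
        assume "i \<noteq> Suc k" "j = Suc k" then show ?thesis using ij fv av by auto
      next
        assume ne: "i \<noteq> Suc k" "j \<noteq> Suc k"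
        then have "i \<in> {1..k}" "j \<in> {1..k}" using ij(1,2) by auto
        moreover have "f i = m" "f j = m" using ij(3) ne av by auto
        ultimately show ?thesis using fu by blast
      qed simp
    qed
  qed
qed

lemma C0_card: "finite (C0 m k) \<and> card (C0 m k) = m ^ k"
proof (induction k)
  case 0
  have "C0 m 0 = {\<lambda>_. 0}" by (auto simp: C0_def)
  then show ?case by simp
next
  case (Suc k)
  then show ?case using upd_card[OF C0_sub, of m k "{..<m}"] by (simp add: C0_rec)
qed

lemma C1_card: "finite (C1 m k) \<and> card (C1 m k) = m ^ k + k * m ^ (k - 1)"
proof (induction k)
  case 0
  have "C1 m 0 = {\<lambda>_. 0}"
  proof
    show "C1 m 0 \<subseteq> {\<lambda>_. 0}" using C1_zero by fastforce
    show "{\<lambda>_. 0} \<subseteq> C1 m 0" by (auto intro!: C1_I)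
  qed
  then show ?case by simp
next
  case (Suc k)
  have A: "finite (upd k ` (C1 m k \<times> {..<m}))"
    "card (upd k ` (C1 m k \<times> {..<m})) = (m ^ k + k * m ^ (k - 1)) * m"
    using upd_card[OF C1_sub, of m k "{..<m}"] Suc by auto
  have B: "finite (upd k ` (C0 m k \<times> {m}))"
    "card (upd k ` (C0 m k \<times> {m})) = m ^ k"
    using upd_card[OF C0_sub, of m k "{m}"] C0_card by auto
  have D: "upd k ` (C1 m k \<times> {..<m}) \<inter> upd k ` (C0 m k \<times> {m}) = {}"
    by (auto simp: upd_def dest!: fun_cong[where x = "Suc k"])
  have "card (C1 m (Suc k)) = (m ^ k + k * m ^ (k - 1)) * m + m ^ k"
    unfolding C1_rec using card_Un_disjoint[OF A(1) B(1) D] A B by simp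
  also have "\<dots> = m ^ Suc k + Suc k * m ^ (Suc k - 1)"
  proof (cases k)
    case 0 then show ?thesis by simp
  next
    case (Suc j) then show ?thesis by (simp add: algebra_simps)
  qed
  finally show ?case using A B by (simp add: C1_rec)
qed

lemma std_eq:
  assumes "n \<ge> 1"
  shows "standard_monomials n (M1_gens n) = C1 (n - 1) n"
proof
  show "standard_monomials n (M1_gens n) \<subseteq> C1 (n - 1) n"
  proof
    fix a assume a: "a \<in> standard_monomials n (M1_gens n)"
    have mon: "\<forall>i. i \<notin> {1..n} \<longrightarrow> a i = 0" using a by (simp add: standard_monomials_def monomials_def)
    have g1: "\<And>i. i \<in> {1..n} \<Longrightarrow> \<not> mon_dvd (xpow i n) a"
      using a by (auto simp: standard_monomials_def M1_gens_def)
    have g2: "\<And>i j. 1 \<le> i \<Longrightarrow> i < j \<Longrightarrow> j \<le> n \<Longrightarrow>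
       \<not> mon_dvd (\<lambda>l. xpow i (n - 1) l + xpow j (n - 1) l) a"
      using a unfolding standard_monomials_def M1_gens_def by blast
    have le: "a i \<le> n - 1" if i: "i \<in> {1..n}" for i
    proof -
      from g1[OF i] obtain l where "xpow i n l > a l" by (auto simp: mon_dvd_def not_le)
      then have "l = i" "a i < n" by (auto simp: xpow_def split: if_splits)
      then show ?thesis by simp
    qed
    have two: "i = j" if "i \<in> {1..n}" "j \<in> {1..n}" "a i = n - 1" "a j = n - 1" for i j
    proof (rule ccontr)
      assume ne: "i \<noteq> j"
      have "\<not> mon_dvd (\<lambda>l. xpow (min i j) (n - 1) l + xpow (max i j) (n - 1) l) a"
        using g2[of "min i j" "max i j"] that ne by auto
      then obtain l where "xpow (min i j) (n - 1) l + xpow (max i j) (n - 1) l > a l"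
        by (auto simp: mon_dvd_def not_le)
      then show False using that ne by (auto simp: xpow_def min_def max_def split: if_splits)
    qed
    show "a \<in> C1 (n - 1) n" using mon le two by (intro C1_I) blast+
  qed
next
  show "C1 (n - 1) n \<subseteq> standard_monomials n (M1_gens n)"
  proof
    fix a assume a: "a \<in> C1 (n - 1) n"
    have mon: "a \<in> monomials n" using C1_zero[OF a] unfolding monomials_def by blast
    have "\<not> mon_dvd g a" if g: "g \<in> M1_gens n" for g
    proof -
      from g consider (A) i where "i \<in> {1..n}" "g = xpow i n"
        | (B) i j where "1 \<le> i" "i < j" "j \<le> n" "g = (\<lambda>l. xpow i (n - 1) l + xpow j (n - 1) l)"
        unfolding M1_gens_def by blast
      then show ?thesis
      proof cases
        case A
        have "a i \<le> n - 1" using C1_le[OF a] A by blast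
        moreover have "g i = n" using A by (simp add: xpow_def)
        ultimately have "a i < g i" using \<open>n \<ge> 1\<close> by linarith
        then show ?thesis by (auto simp: mon_dvd_def not_le intro: exI[of _ i])
      next
        case B
        have ij: "i \<in> {1..n}" "j \<in> {1..n}" "i \<noteq> j" using B by auto
        have "a i \<le> n - 1" "a j \<le> n - 1" using C1_le[OF a] ij by blast+
        moreover have "\<not> (a i = n - 1 \<and> a j = n - 1)" using C1_uniq[OF a] ij by blast
        ultimately have "a i < g i \<or> a j < g j" using B ij by (auto simp: xpow_def)
        then show ?thesis by (auto simp: mon_dvd_def not_le)
      qed
    qed
    then show "a \<in> standard_monomials n (M1_gens n)" using mon by (simp add: standard_monomials_def)
  qed
qed

theorem theorem3p2:
  fixes n :: nat
  assumes "n \<ge> 1"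
  shows "finite (standard_monomials n (M1_gens n))
    \<and> card (standard_monomials n (M1_gens n)) = (2 * n - 1) * (n - 1) ^ (n - 1)"
proof -
  obtain k where k: "n = Suc k" using assms by (cases n) auto
  have "k ^ Suc k + Suc k * k ^ k = (2 * Suc k - 1) * k ^ k" by (simp add: algebra_simps)
  then show ?thesis using std_eq[OF assms] C1_card[of "n - 1" n] k by simp
qed

end
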